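(* Let $\Gamma(t)=\lim_{n\to\infty}\frac1n\log\mathbb{E}(e^{tH_n})$ and $p^*=\frac{a_0}{1-\sum_{i=1}^\infty a_i}$. Then: (1) for $t\ge0$, $$\log\big(1+(e^t-1)p^*\big)\le\Gamma(t)\le\log\Big(1+(e^t-1)\sum_{i=0}^\infty a_i\Big);$$ (2) for $t<0$, $$\max\Big\{\log\big(1+(e^t-1)p^*\big),\ \log(1-a_0)\Big\}\le\Gamma(t)\le\log\big(1+(e^t-1)a_0\big).$$
   Context: Standing setup (discrete-time Hawkes process, DTHP). Let $(a_i)_{i=0}^\infty$ be a sequence of strictly positive real numbers with $\sum_{i=0}^\infty a_i<1$ and $\sum_{i=1}^\infty i\,a_i<\infty$. The arrival process $\{\xi_n\}_{n\ge1}$ is a sequence of $\{0,1\}$-valued random variables on a probability space $(\Omega,\mathcal F,\mathbb P)$ with $\mathbb{P}(\xi_1=1)=a_0$, $\mathbb P(\xi_1=0)=1-a_0$, and for $n\ge2$, $$\mathbb{P}(\xi_n=1\mid \xi_1,\dots,\xi_{n-1})=a_0+\sum_{i=1}^{n-1}a_{n-i}\xi_i,\qquad \mathbb{P}(\xi_n=0\mid \xi_1,\dots,\xi_{n-1})=1-\Big(a_0+\sum_{i=1}^{n-1}a_{n-i}\xi_i\Big).$$ The DTHP is $H_n=\sum_{i=1}^n\xi_i$, and $\mathcal F_n=\sigma(\xi_1,\dots,\xi_n)$. The limit $\Gamma(t)$ exists for every $t$. One may use that $\xi_1,\dots,\xi_n$ are associated random variables for each $n$ (a fact known from the literature). *)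

theory Defs
  imports "HOL-Probability.Probability"
begin

definition bind01 :: "bool \<Rightarrow> real" where
  "bind01 b = (if b then 1 else 0)"

definition dthp_intensity :: "(nat \<Rightarrow> real) \<Rightarrow> nat \<Rightarrow> (nat \<Rightarrow> bool) \<Rightarrow> real" where
  "dthp_intensity a n x = a 0 + (\<Sum>i\<in>{1..<n}. a (n - i) * bind01 (x i))"

text \<open>The arrival process xi (indexed from 1) on the probability space M is a DTHP with
  kernel a: each xi i is a random variable, and for every n \<ge> 1 and every possible past
  x 1, ..., x (n-1), P(xi n = 1 and xi i = x i for i < n) equals the intensity times
  P(xi i = x i for i < n) (elementary conditional probability given the discrete past;
  for n = 1 this reads P(xi 1 = 1) = a 0).\<close>
definition is_DTHP :: "'w measure \<Rightarrow> (nat \<Rightarrow> real) \<Rightarrow> (nat \<Rightarrow> 'w \<Rightarrow> bool) \<Rightarrow> bool" where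
  "is_DTHP M a \<xi> \<longleftrightarrow> prob_space M \<and>
     (\<forall>i. \<xi> i \<in> measurable M (count_space UNIV)) \<and>
     (\<forall>n\<ge>1. \<forall>x. measure M {\<omega>\<in>space M. (\<forall>i\<in>{1..<n}. \<xi> i \<omega> = x i) \<and> \<xi> n \<omega>}
        = dthp_intensity a n x * measure M {\<omega>\<in>space M. \<forall>i\<in>{1..<n}. \<xi> i \<omega> = x i})"

definition dthp_H :: "(nat \<Rightarrow> 'w \<Rightarrow> bool) \<Rightarrow> nat \<Rightarrow> 'w \<Rightarrow> real" where
  "dthp_H \<xi> n \<omega> = (\<Sum>i\<in>{1..n}. bind01 (\<xi> i \<omega>))"

end

theory Submission
  imports Defs
begin

definition Sn :: "nat \<Rightarrow> (nat \<Rightarrow> bool) set" where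
  "Sn n = {x. \<forall>i. x i \<longrightarrow> 1 \<le> i \<and> i \<le> n}"

lemma Sn_0: "Sn 0 = {\<lambda>_. False}"
  unfolding Sn_def by (auto simp: fun_eq_iff)

lemma Sn_notSuc: "x \<in> Sn n \<Longrightarrow> \<not> x (Suc n)"
  unfolding Sn_def by auto

lemma Sn_upd: "x \<in> Sn n \<Longrightarrow> x(Suc n := True) \<in> Sn (Suc n)"
  unfolding Sn_def by (auto split: if_splits)

lemma Sn_mono: "x \<in> Sn n \<Longrightarrow> x \<in> Sn (Suc n)"
  unfolding Sn_def by auto

lemma Sn_Suc: "Sn (Suc n) = Sn n \<union> (\<lambda>x. x(Suc n := True)) ` Sn n"
proof
  show "Sn (Suc n) \<subseteq> Sn n \<union> (\<lambda>x. x(Suc n := True)) ` Sn n"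
  proof
    fix x assume x: "x \<in> Sn (Suc n)"
    show "x \<in> Sn n \<union> (\<lambda>x. x(Suc n := True)) ` Sn n"
    proof (cases "x (Suc n)")
      case True
      have e: "x = (x(Suc n := False))(Suc n := True)" using True by (simp add: fun_eq_iff)
      have "x(Suc n := False) \<in> Sn n" unfolding Sn_def
      proof (intro CollectI allI impI)
        fix i assume "(x(Suc n := False)) i"
        then have "x i" "i \<noteq> Suc n" by (auto split: if_splits)
        then show "1 \<le> i \<and> i \<le> n" using x unfolding Sn_def by (auto simp: le_Suc_eq)
      qed
      then show ?thesis using e by blast
    next
      case False
      have "x \<in> Sn n" unfolding Sn_def
      proof (intro CollectI allI impI)
        fix i assume "x i"
        then have "i \<noteq> Suc n" using False by auto
        then show "1 \<le> i \<and> i \<le> n" using x \<open>x i\<close> unfolding Sn_def by (auto simp: le_Suc_eq)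
      qed
      then show ?thesis by blast
    qed
  qed
next
  show "Sn n \<union> (\<lambda>x. x(Suc n := True)) ` Sn n \<subseteq> Sn (Suc n)"
    using Sn_upd Sn_mono by blast
qed
lemma finite_Sn: "finite (Sn n)"
  by (induction n) (auto simp: Sn_0 Sn_Suc)

lemma sum_Sn_Suc: "(\<Sum>x\<in>Sn (Suc n). h x) = (\<Sum>x\<in>Sn n. h x + h (x(Suc n := True)))"
proof -
  have disj: "Sn n \<inter> (\<lambda>x. x(Suc n := True)) ` Sn n = {}"
  proof -
    have False if "x \<in> Sn n" "y \<in> Sn n" "x = y(Suc n := True)" for x y
      using Sn_notSuc[OF that(1)] that(3) by simp
    then show ?thesis by blast
  qed
  have inj: "inj_on (\<lambda>x. x(Suc n := True)) (Sn n)"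
  proof (rule inj_onI)
    fix x y assume "x \<in> Sn n" "y \<in> Sn n" "x(Suc n := True) = y(Suc n := True)"
    note h = this
    show "x = y"
    proof
      fix i
      show "x i = y i"
      proof (cases "i = Suc n")
        case True then show ?thesis using Sn_notSuc[OF h(1)] Sn_notSuc[OF h(2)] by simp
      next
        case False then show ?thesis using fun_cong[OF h(3), of i] by simp
      qed
    qed
  qed
  have "(\<Sum>x\<in>Sn (Suc n). h x) = (\<Sum>x\<in>Sn n. h x) + (\<Sum>x\<in>(\<lambda>x. x(Suc n := True)) ` Sn n. h x)"
    unfolding Sn_Suc by (rule sum.union_disjoint) (auto simp: finite_Sn disj)
  also have "(\<Sum>x\<in>(\<lambda>x. x(Suc n := True)) ` Sn n. h x) = (\<Sum>x\<in>Sn n. h (x(Suc n := True)))"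
    using inj by (simp add: sum.reindex)
  finally show ?thesis by (simp add: sum.distrib)
qed

definition EE :: "(nat \<Rightarrow> (nat \<Rightarrow> bool) \<Rightarrow> real) \<Rightarrow> nat \<Rightarrow> ((nat \<Rightarrow> bool) \<Rightarrow> real) \<Rightarrow> real" where
  "EE w n F = (\<Sum>x\<in>Sn n. F x * w n x)"

definition monoS :: "nat \<Rightarrow> ((nat \<Rightarrow> bool) \<Rightarrow> real) \<Rightarrow> bool" where
  "monoS n F \<longleftrightarrow> (\<forall>x\<in>Sn n. \<forall>y\<in>Sn n. (\<forall>i. x i \<longrightarrow> y i) \<longrightarrow> F x \<le> F y)"

lemma EE_cong: "(\<And>x. x \<in> Sn n \<Longrightarrow> F x = G x) \<Longrightarrow> EE w n F = EE w n G"
  unfolding EE_def by (auto intro: sum.cong)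

lemma EE_cmult: "EE w n (\<lambda>x. c * F x) = c * EE w n F"
  unfolding EE_def by (simp add: sum_distrib_left mult.assoc)

lemma EE_add: "EE w n (\<lambda>x. F x + G x) = EE w n F + EE w n G"
  unfolding EE_def by (simp add: sum.distrib distrib_right)

lemma EE_neg: "EE w n (\<lambda>x. - F x) = - EE w n F"
  unfolding EE_def by (simp add: sum_negf)

lemma EE_sum: "EE w n (\<lambda>x. \<Sum>i\<in>I. f i x) = (\<Sum>i\<in>I. EE w n (f i))"
  unfolding EE_def by (simp add: sum_distrib_right sum.swap[of _ I])

locale kern =
  fixes w :: "nat \<Rightarrow> (nat \<Rightarrow> bool) \<Rightarrow> real" and lam :: "nat \<Rightarrow> (nat \<Rightarrow> bool) \<Rightarrow> real"
  assumes w0: "w 0 (\<lambda>_. False) = 1"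
   and wF: "\<And>n x. x \<in> Sn n \<Longrightarrow> w (Suc n) x = (1 - lam (Suc n) x) * w n x"
   and wT: "\<And>n x. x \<in> Sn n \<Longrightarrow> w (Suc n) (x(Suc n := True)) = lam (Suc n) x * w n x"
   and lam0: "\<And>n x. 0 \<le> lam n x" and lam1: "\<And>n x. lam n x \<le> 1"
   and lam_mono: "\<And>n x y. (\<forall>i. x i \<longrightarrow> y i) \<Longrightarrow> lam n x \<le> lam n y"
begin

lemma w_nonneg: "x \<in> Sn n \<Longrightarrow> 0 \<le> w n x"
proof (induction n arbitrary: x)
  case 0 then show ?case using w0 by (simp add: Sn_0)
next
  case (Suc n)
  then consider "x \<in> Sn n" | y where "y \<in> Sn n" "x = y(Suc n := True)" by (auto simp: Sn_Suc)
  then show ?case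
  proof cases
    case 1 then show ?thesis using wF[of x n] Suc.IH lam1[of "Suc n" x] by simp
  next
    case 2
    then have "w (Suc n) x = lam (Suc n) y * w n y" using wT by blast
    then show ?thesis using Suc.IH[of y] lam0[of "Suc n" y] 2(1) by (metis mult_nonneg_nonneg)
  qed
qed

lemma EE_Suc: "EE w (Suc n) F =
   EE w n (\<lambda>x. (1 - lam (Suc n) x) * F x + lam (Suc n) x * F (x(Suc n := True)))"
  unfolding EE_def sum_Sn_Suc
  by (rule sum.cong) (auto simp: wF wT algebra_simps)

lemma EE_mono: "(\<And>x. x \<in> Sn n \<Longrightarrow> F x \<le> G x) \<Longrightarrow> EE w n F \<le> EE w n G"
  unfolding EE_def by (rule sum_mono) (simp add: mult_right_mono w_nonneg)

lemma EE_const: "EE w n (\<lambda>_. c) = c"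
proof (induction n)
  case 0 then show ?case by (simp add: EE_def Sn_0 w0)
next
  case (Suc n) then show ?case by (simp add: EE_Suc algebra_simps)
qed

lemma FKG: "monoS n F \<Longrightarrow> monoS n G \<Longrightarrow> EE w n F * EE w n G \<le> EE w n (\<lambda>x. F x * G x)"
proof (induction n arbitrary: F G)
  case 0 then show ?case by (simp add: EE_def Sn_0 w0)
next
  case (Suc n)
  define l where "l = lam (Suc n)"
  let ?u = "\<lambda>x. x(Suc n := True)"
  define F' where "F' x = (1 - l x) * F x + l x * F (?u x)" for x
  define G' where "G' x = (1 - l x) * G x + l x * G (?u x)" for x
  have SS: "x \<in> Sn n \<Longrightarrow> x \<in> Sn (Suc n) \<and> ?u x \<in> Sn (Suc n)" for x
    by (simp add: Sn_Suc)
  have le: "x \<le> y \<Longrightarrow> ?u x \<le> ?u y" for x y :: "nat \<Rightarrow> bool" by (auto simp: le_fun_def)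
  have mono': "monoS n H'" if H: "monoS (Suc n) H" and H'def: "\<And>x. H' x = (1 - l x) * H x + l x * H (?u x)" for H H'
    unfolding monoS_def
  proof (intro ballI impI)
    fix x y assume x: "x \<in> Sn n" and y: "y \<in> Sn n" and xy: "\<forall>i. x i \<longrightarrow> y i"
    have a1: "H x \<le> H y" using H SS[OF x] SS[OF y] xy unfolding monoS_def by blast
    have a2: "H (?u x) \<le> H (?u y)" using H SS[OF x] SS[OF y] xy unfolding monoS_def by auto
    have a3: "H x \<le> H (?u x)" using H SS[OF x] unfolding monoS_def by auto
    have a4: "l x \<le> l y" using lam_mono xy unfolding l_def by blast
    have "H' y - H' x = (1 - l y) * (H y - H x) + l y * (H (?u y) - H (?u x)) + (l y - l x) * (H (?u x) - H x)"
      unfolding H'def by (simp add: algebra_simps)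
    also have "\<dots> \<ge> 0" using a1 a2 a3 a4 lam0[of "Suc n" y] lam1[of "Suc n" y] unfolding l_def
      by (intro add_nonneg_nonneg mult_nonneg_nonneg) auto
    finally show "H' x \<le> H' y" by simp
  qed
  have mF: "monoS n F'" by (rule mono'[OF Suc.prems(1)]) (rule F'_def)
  have mG: "monoS n G'" by (rule mono'[OF Suc.prems(2)]) (rule G'_def)
  have "EE w (Suc n) F * EE w (Suc n) G = EE w n F' * EE w n G'"
    by (simp add: EE_Suc F'_def[abs_def] G'_def[abs_def] l_def)
  also have "\<dots> \<le> EE w n (\<lambda>x. F' x * G' x)" by (rule Suc.IH[OF mF mG])
  also have "\<dots> \<le> EE w n (\<lambda>x. (1 - l x) * (F x * G x) + l x * (F (?u x) * G (?u x)))"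
  proof (rule EE_mono)
    fix x assume x: "x \<in> Sn n"
    have "(1 - l x) * (F x * G x) + l x * (F (?u x) * G (?u x)) - F' x * G' x
       = l x * (1 - l x) * ((F (?u x) - F x) * (G (?u x) - G x))"
      unfolding F'_def G'_def by (simp add: algebra_simps)
    also have "\<dots> \<ge> 0"
    proof -
      have "F x \<le> F (?u x)" "G x \<le> G (?u x)"
        using Suc.prems SS[OF x] unfolding monoS_def by auto
      then show ?thesis using lam0[of "Suc n" x] lam1[of "Suc n" x] unfolding l_def
        by (intro mult_nonneg_nonneg) auto
    qed
    finally show "F' x * G' x \<le> (1 - l x) * (F x * G x) + l x * (F (?u x) * G (?u x))" by simp
  qed
  also have "\<dots> = EE w (Suc n) (\<lambda>x. F x * G x)" by (simp add: EE_Suc l_def)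
  finally show ?case .
qed


lemma EE_Suc_prod:
  assumes "\<And>x. x \<in> Sn n \<Longrightarrow> F (x(Suc n := True)) = F x"
  shows "EE w (Suc n) (\<lambda>x. F x * g (x (Suc n))) =
    EE w n (\<lambda>x. F x * ((1 - lam (Suc n) x) * g False + lam (Suc n) x * g True))"
  unfolding EE_Suc
  by (rule EE_cong) (simp add: assms Sn_notSuc algebra_simps)

lemma EE_marg1:
  assumes "\<And>x. x \<in> Sn n \<Longrightarrow> F (x(Suc n := True)) = F x"
  shows "EE w (Suc n) F = EE w n F"
  unfolding EE_Suc
  by (rule EE_cong) (simp add: assms algebra_simps)

lemma EE_marg:
  assumes "k \<le> n" "\<And>x y. (\<forall>i\<le>k. x i = y i) \<Longrightarrow> F x = F y"
  shows "EE w n F = EE w k F"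
  using assms(1)
proof (induction n rule: dec_induct)
  case base then show ?case by simp
next
  case (step m)
  have "EE w (Suc m) F = EE w m F"
    by (rule EE_marg1) (rule assms(2), use step in auto)
  then show ?case using step by simp
qed

end


context
  fixes a r :: "nat \<Rightarrow> real" and s1 ps :: real
  assumes apos: "\<And>i. a i > 0"
    and summ1: "summable (\<lambda>i. a (Suc i))"
    and s1_def: "s1 = (\<Sum>i. a (Suc i))"
    and lt: "a 0 + s1 < 1"
    and ps_def: "ps = a 0 / (1 - s1)"
    and rec: "\<And>m. r m = a 0 + (\<Sum>k<m. a (m - k) * r k)"
begin

lemma r_ge: "a 0 \<le> r m"
proof (induction m rule: less_induct)
  case (less m)
  have "0 \<le> (\<Sum>k<m. a (m - k) * r k)"
    using less apos by (intro sum_nonneg mult_nonneg_nonneg) (auto intro: less_imp_le order.trans[OF less_imp_le[OF apos[of 0]]])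
  then show ?case by (subst rec) simp
qed

lemma r_nonneg: "0 \<le> r m"
  using r_ge[of m] apos[of 0] by linarith

lemma sum_a_rev: "(\<Sum>k<m. a (m - k)) = (\<Sum>j<m. a (Suc j))"
proof -
  have "(\<Sum>k<m. a (m - k)) = (\<Sum>k<m. (\<lambda>j. a (Suc j)) (m - Suc k))"
    by (rule sum.cong) (auto simp: Suc_diff_Suc)
  also have "\<dots> = (\<Sum>j<m. a (Suc j))" by (rule sum.nat_diff_reindex)
  finally show ?thesis .
qed

lemma S_le: "(\<Sum>j<m. a (Suc j)) \<le> s1"
  unfolding s1_def by (rule sum_le_suminf[OF summ1]) (auto intro: less_imp_le apos)

lemma s1_nonneg: "0 \<le> s1"
  unfolding s1_def by (rule suminf_nonneg[OF summ1]) (auto intro: less_imp_le apos)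

lemma pos1: "0 < 1 - s1"
  using lt apos[of 0] by linarith

lemma ps_eq: "a 0 + ps * s1 = ps"
  using pos1 unfolding ps_def by (simp add: field_simps)

lemma ps_nonneg: "0 \<le> ps"
  using lt apos[of 0] unfolding ps_def by simp

lemma ps_lt1: "ps < 1"
  using lt pos1 unfolding ps_def by (simp add: divide_less_eq)

lemma r_le: "r m \<le> ps"
proof (induction m rule: less_induct)
  case (less m)
  have "(\<Sum>k<m. a (m - k) * r k) \<le> (\<Sum>k<m. a (m - k) * ps)"
    using less apos by (intro sum_mono mult_left_mono) (auto intro: less_imp_le)
  also have "\<dots> = ps * (\<Sum>j<m. a (Suc j))"
    by (simp add: sum_distrib_left sum_distrib_right sum_a_rev[symmetric] mult.commute)
  also have "\<dots> \<le> ps * s1" by (rule mult_left_mono[OF S_le ps_nonneg])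
  finally show ?case using ps_eq by (subst rec) linarith
qed

lemma r_inc_step: "r m \<le> r (Suc m)"
proof (induction m rule: less_induct)
  case (less m)
  have "r (Suc m) = a 0 + (a (Suc m) * r 0 + (\<Sum>k<m. a (Suc m - Suc k) * r (Suc k)))"
  proof -
    have "(\<Sum>k<Suc m. a (Suc m - k) * r k) = a (Suc m) * r 0 + (\<Sum>k<m. a (Suc m - Suc k) * r (Suc k))"
      by (subst sum.lessThan_Suc_shift) simp
    then show ?thesis using rec[of "Suc m"] by simp
  qed
  also have "\<dots> \<ge> a 0 + (\<Sum>k<m. a (m - k) * r k)"
  proof -
    have "(\<Sum>k<m. a (m - k) * r k) \<le> (\<Sum>k<m. a (Suc m - Suc k) * r (Suc k))"
      using less apos by (intro sum_mono mult_left_mono) (auto intro: less_imp_le)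
    moreover have "0 \<le> a (Suc m) * r 0" using apos r_nonneg by (simp add: less_imp_le)
    ultimately show ?thesis by linarith
  qed
  finally show ?case by (subst rec) simp
qed

lemma r_incseq: "incseq r"
  by (rule incseq_SucI) (rule r_inc_step)

lemma r_lim: "r \<longlonglongrightarrow> ps"
proof -
  obtain L where L: "r \<longlonglongrightarrow> L" "\<And>i. r i \<le> L"
    using incseq_convergent[OF r_incseq, of ps] r_le by blast
  have Lle: "L \<le> ps" by (rule LIMSEQ_le_const2[OF L(1)]) (auto intro: r_le)
  have key: "a 0 + (\<Sum>j<K. a (Suc j)) * r n \<le> L" for K n
  proof -
    have "(\<Sum>k\<in>{n..<K+n}. a (K + n - k) * r n) \<le> (\<Sum>k\<in>{n..<K+n}. a (K + n - k) * r k)"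
      using apos incseq_SucD r_incseq
      by (intro sum_mono mult_left_mono) (auto intro: less_imp_le incseqD[OF r_incseq])
    also have "\<dots> \<le> (\<Sum>k<K+n. a (K + n - k) * r k)"
      using apos r_nonneg by (intro sum_mono2) (auto intro: mult_nonneg_nonneg less_imp_le)
    finally have A: "(\<Sum>k\<in>{n..<K+n}. a (K + n - k) * r n) \<le> (\<Sum>k<K+n. a (K + n - k) * r k)" .
    have "(\<Sum>k\<in>{n..<K+n}. a (K + n - k)) = (\<Sum>k\<in>{0+n..<K+n}. a (K + n - k))" by simp
    also have "\<dots> = (\<Sum>i\<in>{0..<K}. a (K + n - (i + n)))" by (rule sum.shift_bounds_nat_ivl)
    also have "\<dots> = (\<Sum>i<K. a (K - i))" by (simp add: atLeast0LessThan)
    also have "\<dots> = (\<Sum>j<K. a (Suc j))" by (rule sum_a_rev)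
    finally have B: "(\<Sum>k\<in>{n..<K+n}. a (K + n - k)) = (\<Sum>j<K. a (Suc j))" .
    have C: "(\<Sum>k\<in>{n..<K+n}. a (K + n - k) * r n) = (\<Sum>j<K. a (Suc j)) * r n"
      using B by (simp only: sum_distrib_right[symmetric])
    have "a 0 + (\<Sum>j<K. a (Suc j)) * r n \<le> r (K + n)"
      using A C rec[of "K+n"] by linarith
    also have "\<dots> \<le> L" by (rule L(2))
    finally show ?thesis .
  qed
  have key2: "a 0 + (\<Sum>j<K. a (Suc j)) * L \<le> L" for K
    by (rule LIMSEQ_le_const2[where X="\<lambda>n. a 0 + (\<Sum>j<K. a (Suc j)) * r n"])
       (auto intro!: tendsto_intros L(1) key)
  have "a 0 + s1 * L \<le> L"
    unfolding s1_def
    by (rule LIMSEQ_le_const2[where X="\<lambda>K. a 0 + (\<Sum>j<K. a (Suc j)) * L"])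
       (auto intro!: tendsto_intros summable_LIMSEQ[OF summ1] key2)
  then have "a 0 \<le> L * (1 - s1)" by (simp add: algebra_simps)
  then have "ps \<le> L" using pos1 unfolding ps_def by (simp add: divide_le_eq)
  with Lle have "L = ps" by simp
  with L(1) show ?thesis by simp
qed

end


definition qq :: "'w measure \<Rightarrow> (nat \<Rightarrow> 'w \<Rightarrow> bool) \<Rightarrow> nat \<Rightarrow> (nat \<Rightarrow> bool) \<Rightarrow> real" where
  "qq M \<xi> n x = measure M {\<omega>\<in>space M. \<forall>i\<in>{1..n}. \<xi> i \<omega> = x i}"

lemma intensity_upd: "dthp_intensity a (Suc n) (x(Suc n := b)) = dthp_intensity a (Suc n) x"
  unfolding dthp_intensity_def by (intro arg_cong2[where f="(+)"] refl sum.cong) auto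

lemma intensity_mono: "(\<And>i. 0 \<le> a i) \<Longrightarrow> (\<forall>i. x i \<longrightarrow> y i) \<Longrightarrow> dthp_intensity a n x \<le> dthp_intensity a n y"
  unfolding dthp_intensity_def bind01_def by (intro add_left_mono sum_mono mult_left_mono) auto

lemma intensity_ge: "(\<And>i. 0 \<le> a i) \<Longrightarrow> a 0 \<le> dthp_intensity a n x"
  unfolding dthp_intensity_def bind01_def by (auto intro!: sum_nonneg)

lemma intensity_le:
  assumes "\<And>i. 0 \<le> a i" "summable a"
  shows "dthp_intensity a n x \<le> (\<Sum>i. a i)"
proof -
  have "(\<Sum>i\<in>{1..<n}. a (n - i) * bind01 (x i)) \<le> (\<Sum>i\<in>{1..<n}. a (n + 1 - Suc i))"
    using assms unfolding bind01_def by (intro sum_mono) auto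
  also have "\<dots> = (\<Sum>i\<in>{1..<n}. a i)" by (rule sum.atLeastLessThan_rev[symmetric])
  also have "\<dots> = (\<Sum>i\<in>{0..<n-1}. a (Suc i))"
    by (cases n) (simp_all add: sum.shift_bounds_Suc_ivl[symmetric])
  also have "\<dots> \<le> (\<Sum>i. a (Suc i))"
    using assms by (intro sum_le_suminf) (auto simp: summable_Suc_iff)
  also have "\<dots> = (\<Sum>i. a i) - a 0" using assms(2) by (rule suminf_split_head)
  finally show ?thesis unfolding dthp_intensity_def by simp
qed

definition vecx :: "(nat \<Rightarrow> 'w \<Rightarrow> bool) \<Rightarrow> nat \<Rightarrow> 'w \<Rightarrow> nat \<Rightarrow> bool" where
  "vecx \<xi> n \<omega> = (\<lambda>i. 1 \<le> i \<and> i \<le> n \<and> \<xi> i \<omega>)"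

lemma vecx_Sn: "vecx \<xi> n \<omega> \<in> Sn n"
  unfolding vecx_def Sn_def by auto

lemma dthp_H_vecx: "dthp_H \<xi> n \<omega> = (\<Sum>i\<in>{1..n}. bind01 (vecx \<xi> n \<omega> i))"
  unfolding dthp_H_def vecx_def by (rule sum.cong) auto

context
  fixes M :: "'w measure" and a :: "nat \<Rightarrow> real" and \<xi> :: "nat \<Rightarrow> 'w \<Rightarrow> bool"
  assumes dthp: "is_DTHP M a \<xi>"
begin

lemma ps: "prob_space M" using dthp unfolding is_DTHP_def by blast

lemma xi_meas[measurable]: "\<xi> i \<in> measurable M (count_space UNIV)"
  using dthp unfolding is_DTHP_def by blast

lemma cyl_sets: "{\<omega>\<in>space M. \<forall>i\<in>I. \<xi> i \<omega> = x i} \<in> sets M" if "finite I"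
  using that by measurable

lemma DD: "n \<ge> 1 \<Longrightarrow> measure M {\<omega>\<in>space M. (\<forall>i\<in>{1..<n}. \<xi> i \<omega> = x i) \<and> \<xi> n \<omega>}
   = dthp_intensity a n x * measure M {\<omega>\<in>space M. \<forall>i\<in>{1..<n}. \<xi> i \<omega> = x i}"
  using dthp unfolding is_DTHP_def by blast

lemma DD': "measure M {\<omega>\<in>space M. (\<forall>i\<in>{1..n}. \<xi> i \<omega> = x i) \<and> \<xi> (Suc n) \<omega>}
   = dthp_intensity a (Suc n) x * measure M {\<omega>\<in>space M. \<forall>i\<in>{1..n}. \<xi> i \<omega> = x i}"
  using DD[of "Suc n" x] by (simp add: atLeastLessThanSuc_atLeastAtMost)

lemma qq0: "qq M \<xi> 0 x = 1"
  unfolding qq_def using prob_space.prob_space[OF ps] by simp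

lemma qqT: "qq M \<xi> (Suc n) (x(Suc n := True)) = dthp_intensity a (Suc n) x * qq M \<xi> n x"
proof -
  have "{\<omega>\<in>space M. \<forall>i\<in>{1..Suc n}. \<xi> i \<omega> = (x(Suc n := True)) i}
      = {\<omega>\<in>space M. (\<forall>i\<in>{1..<Suc n}. \<xi> i \<omega> = x i) \<and> \<xi> (Suc n) \<omega>}"
    by (auto simp: atLeastLessThanSuc_atLeastAtMost[symmetric] less_Suc_eq)
  then show ?thesis using DD[of "Suc n" x] unfolding qq_def
    by (simp add: atLeastLessThanSuc_atLeastAtMost)
qed

lemma qqF: "qq M \<xi> (Suc n) (x(Suc n := False)) = (1 - dthp_intensity a (Suc n) x) * qq M \<xi> n x"
proof -
  let ?A = "{\<omega>\<in>space M. \<forall>i\<in>{1..n}. \<xi> i \<omega> = x i}"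
  let ?B = "{\<omega>\<in>space M. (\<forall>i\<in>{1..n}. \<xi> i \<omega> = x i) \<and> \<xi> (Suc n) \<omega>}"
  have e1: "{\<omega>\<in>space M. \<forall>i\<in>{1..Suc n}. \<xi> i \<omega> = (x(Suc n := False)) i} = ?A - ?B"
    by (auto simp: atLeastAtMostSuc_conv)
  have e2: "measure M ?B = dthp_intensity a (Suc n) x * measure M ?A"
    by (rule DD')
  have sA: "?A \<in> sets M" by (rule cyl_sets) simp
  have sB: "?B \<in> sets M" by measurable
  have "measure M (?A - ?B) = measure M ?A - measure M ?B"
  proof -
    interpret prob_space M by (rule ps)
    show ?thesis using sA sB by (intro finite_measure_Diff) auto
  qed
  then show ?thesis unfolding qq_def e1 e2 by (simp add: algebra_simps)
qed


lemma integral_link: "integral\<^sup>L M (\<lambda>\<omega>. H (vecx \<xi> n \<omega>)) = (\<Sum>x\<in>Sn n. H x * qq M \<xi> n x)"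
proof -
  interpret prob_space M by (rule ps)
  define A where "A x = {\<omega>\<in>space M. \<forall>i\<in>{1..n}. \<xi> i \<omega> = x i}" for x
  have A_sets: "A x \<in> sets M" for x unfolding A_def by (rule cyl_sets) simp
  have memA: "\<omega> \<in> A x \<longleftrightarrow> x = vecx \<xi> n \<omega>" if "x \<in> Sn n" "\<omega> \<in> space M" for x \<omega>
  proof
    assume "\<omega> \<in> A x"
    then have h: "\<forall>i\<in>{1..n}. \<xi> i \<omega> = x i" unfolding A_def by blast
    show "x = vecx \<xi> n \<omega>"
    proof
      fix i show "x i = vecx \<xi> n \<omega> i"
        using h that(1) unfolding vecx_def Sn_def by (cases "1 \<le> i \<and> i \<le> n") auto
    qed
  next
    assume "x = vecx \<xi> n \<omega>"
    then show "\<omega> \<in> A x" using that(2) unfolding A_def vecx_def by auto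
  qed
  have pt: "H (vecx \<xi> n \<omega>) = (\<Sum>x\<in>Sn n. H x * indicator (A x) \<omega>)" if "\<omega> \<in> space M" for \<omega>
  proof -
    have "(\<Sum>x\<in>Sn n. H x * indicator (A x) \<omega>) = (\<Sum>x\<in>Sn n. if x = vecx \<xi> n \<omega> then H x else 0)"
      by (rule sum.cong) (auto simp: memA[OF _ that] indicator_def)
    also have "\<dots> = H (vecx \<xi> n \<omega>)"
      using vecx_Sn[of \<xi> n \<omega>] finite_Sn[of n] by (simp add: sum.delta')
    finally show ?thesis by simp
  qed
  have "integral\<^sup>L M (\<lambda>\<omega>. H (vecx \<xi> n \<omega>)) = integral\<^sup>L M (\<lambda>\<omega>. \<Sum>x\<in>Sn n. H x * indicator (A x) \<omega>)"
    by (rule Bochner_Integration.integral_cong) (auto simp: pt)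
  also have "\<dots> = (\<Sum>x\<in>Sn n. integral\<^sup>L M (\<lambda>\<omega>. H x * indicator (A x) \<omega>))"
  proof (rule Bochner_Integration.integral_sum)
    fix x
    have "integrable M (indicator (A x) :: 'w \<Rightarrow> real)"
      using A_sets[of x] sets.sets_into_space[OF A_sets[of x]]
      by (subst integrable_indicator_iff) (simp add: Int_absorb2 less_top[symmetric])
    then show "integrable M (\<lambda>\<omega>. H x * indicator (A x) \<omega>)" by (rule integrable_mult_right)
  qed
  also have "\<dots> = (\<Sum>x\<in>Sn n. H x * qq M \<xi> n x)"
  proof (intro sum.cong refl)
    fix x
    have "A x \<inter> space M = A x" using sets.sets_into_space[OF A_sets[of x]] by blast
    then show "integral\<^sup>L M (\<lambda>\<omega>. H x * indicator (A x) \<omega>) = H x * qq M \<xi> n x"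
      by (simp add: qq_def A_def)
  qed
  finally show ?thesis .
qed

end


definition PP :: "real \<Rightarrow> nat \<Rightarrow> (nat \<Rightarrow> bool) \<Rightarrow> real" where
  "PP t n x = exp (t * (\<Sum>i\<in>{1..n}. bind01 (x i)))"

lemma PP_Suc: "PP t (Suc n) x = PP t n x * exp (t * bind01 (x (Suc n)))"
  unfolding PP_def by (simp add: sum.cl_ivl_Suc distrib_left exp_add)

lemma PP_upd: "PP t n (x(Suc n := b)) = PP t n x"
  unfolding PP_def by (intro arg_cong[where f=exp] arg_cong2[where f="(*)"] refl sum.cong) auto

lemma PP_pos: "0 < PP t n x" unfolding PP_def by simp

lemma bsum_mono: "(\<forall>i. x i \<longrightarrow> y i) \<Longrightarrow> (\<Sum>i\<in>{1..n}. bind01 (x i)) \<le> (\<Sum>i\<in>{1..n}. bind01 (y i))"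
  unfolding bind01_def by (intro sum_mono) auto

lemma mono_exp_pos: "(\<And>x y. (\<forall>i. x i \<longrightarrow> y i) \<Longrightarrow> s x \<le> s y) \<Longrightarrow> 0 \<le> t \<Longrightarrow> monoS m (\<lambda>x. exp (t * s x))"
  unfolding monoS_def by (auto intro: mult_left_mono)

lemma mono_exp_neg: "(\<And>x y. (\<forall>i. x i \<longrightarrow> y i) \<Longrightarrow> s x \<le> s y) \<Longrightarrow> t \<le> 0 \<Longrightarrow> monoS m (\<lambda>x. - exp (t * s x))"
  unfolding monoS_def by (auto intro: mult_left_mono_neg)

definition QQ :: "nat \<Rightarrow> (nat \<Rightarrow> bool) \<Rightarrow> real" where
  "QQ n x = (if \<forall>i\<in>{1..n}. \<not> x i then 1 else 0)"

lemma QQ_Suc: "QQ (Suc n) x = QQ n x * (if x (Suc n) then 0 else 1)"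
  unfolding QQ_def by (auto simp: atLeastAtMostSuc_conv)

lemma QQ_upd: "QQ n (x(Suc n := b)) = QQ n x"
  unfolding QQ_def by auto

lemma QQ_le_PP: "QQ n x \<le> PP t n x"
proof (cases "\<forall>i\<in>{1..n}. \<not> x i")
  case True
  then have sf: "(\<Sum>i\<in>{1..n}. bind01 (x i)) = 0" by (intro sum.neutral) (simp add: bind01_def)
  have "PP t n x = 1" unfolding PP_def by (simp only: sf) simp
  then show ?thesis using True by (simp add: QQ_def)
next
  case False then show ?thesis using PP_pos[of t n x] by (auto simp: QQ_def)
qed

context
  fixes M :: "'w measure" and a :: "nat \<Rightarrow> real" and \<xi> :: "nat \<Rightarrow> 'w \<Rightarrow> bool"
  assumes pos: "\<And>i. a i > 0" and summ: "summable a" and lt1: "(\<Sum>i. a i) < 1"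
    and dthp: "is_DTHP M a \<xi>"
begin

lemma kern_inst: "kern (qq M \<xi>) (dthp_intensity a)"
proof
  show "qq M \<xi> 0 (\<lambda>_. False) = 1" by (rule qq0[OF dthp])
  fix n x
  show "x \<in> Sn n \<Longrightarrow> qq M \<xi> (Suc n) x = (1 - dthp_intensity a (Suc n) x) * qq M \<xi> n x"
    using qqF[OF dthp, of n x] Sn_notSuc[of x n] by (simp add: fun_upd_idem)
  show "x \<in> Sn n \<Longrightarrow> qq M \<xi> (Suc n) (x(Suc n := True)) = dthp_intensity a (Suc n) x * qq M \<xi> n x"
    by (rule qqT[OF dthp])
  show "0 \<le> dthp_intensity a n x"
    using intensity_ge[of a n x] pos by (meson less_imp_le order.trans)
  show "dthp_intensity a n x \<le> 1"
    using intensity_le[of a n x] summ lt1 pos by (meson less_imp_le order.trans)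
  fix y
  show "\<forall>i. x i \<longrightarrow> y i \<Longrightarrow> dthp_intensity a n x \<le> dthp_intensity a n y"
    using intensity_mono[of a x y n] pos by (simp add: less_imp_le)
qed

interpretation K: kern "qq M \<xi>" "dthp_intensity a" by (rule kern_inst)

definition rr :: "nat \<Rightarrow> real" where
  "rr m = EE (qq M \<xi>) m (dthp_intensity a (Suc m))"

lemma Zint: "integral\<^sup>L M (\<lambda>\<omega>. exp (t * dthp_H \<xi> n \<omega>)) = EE (qq M \<xi>) n (PP t n)"
  using integral_link[OF dthp, of "PP t n" n] unfolding EE_def PP_def dthp_H_vecx by simp

lemma Z0: "EE (qq M \<xi>) 0 (PP t 0) = 1"
proof -
  have "PP t 0 = (\<lambda>_. 1)" by (simp add: PP_def fun_eq_iff)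
  then show ?thesis using K.EE_const[of 0 1] by simp
qed

lemma Zrec: "EE (qq M \<xi>) (Suc n) (PP t (Suc n)) =
   EE (qq M \<xi>) n (\<lambda>x. PP t n x * (1 + (exp t - 1) * dthp_intensity a (Suc n) x))"
proof -
  have "EE (qq M \<xi>) (Suc n) (PP t (Suc n)) =
     EE (qq M \<xi>) (Suc n) (\<lambda>x. PP t n x * (\<lambda>b. exp (t * bind01 b)) (x (Suc n)))"
    by (rule arg_cong[where f="EE (qq M \<xi>) (Suc n)"]) (simp add: PP_Suc fun_eq_iff)
  also have "\<dots> = EE (qq M \<xi>) n (\<lambda>x. PP t n x * ((1 - dthp_intensity a (Suc n) x) * exp (t * bind01 False)
         + dthp_intensity a (Suc n) x * exp (t * bind01 True)))"
    by (rule K.EE_Suc_prod) (simp add: PP_upd)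
  also have "\<dots> = EE (qq M \<xi>) n (\<lambda>x. PP t n x * (1 + (exp t - 1) * dthp_intensity a (Suc n) x))"
    by (rule EE_cong) (simp add: bind01_def algebra_simps)
  finally show ?thesis .
qed

lemma EE_bind: "1 \<le> i \<Longrightarrow> i \<le> m \<Longrightarrow> EE (qq M \<xi>) m (\<lambda>x. bind01 (x i)) = rr (i - 1)"
proof -
  assume i: "1 \<le> i" "i \<le> m"
  then obtain j where j: "i = Suc j" by (cases i) auto
  have "EE (qq M \<xi>) m (\<lambda>x. bind01 (x i)) = EE (qq M \<xi>) i (\<lambda>x. bind01 (x i))"
    by (rule K.EE_marg[OF i(2)]) auto
  also have "\<dots> = EE (qq M \<xi>) (Suc j) (\<lambda>x. (\<lambda>_. 1) x * bind01 (x (Suc j)))" by (simp add: j)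
  also have "\<dots> = EE (qq M \<xi>) j (\<lambda>x. 1 * ((1 - dthp_intensity a (Suc j) x) * bind01 False
         + dthp_intensity a (Suc j) x * bind01 True))"
    by (rule K.EE_Suc_prod) simp
  also have "\<dots> = rr j" unfolding rr_def by (rule EE_cong) (simp add: bind01_def)
  finally show ?thesis using j by simp
qed

lemma rr_rec: "rr m = a 0 + (\<Sum>k<m. a (m - k) * rr k)"
proof -
  have "rr m = EE (qq M \<xi>) m (\<lambda>x. a 0 + (\<Sum>i\<in>{1..<Suc m}. a (Suc m - i) * bind01 (x i)))"
    unfolding rr_def dthp_intensity_def ..
  also have "\<dots> = a 0 + (\<Sum>i\<in>{1..<Suc m}. a (Suc m - i) * EE (qq M \<xi>) m (\<lambda>x. bind01 (x i)))"
    by (simp add: EE_add K.EE_const EE_sum EE_cmult)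
  also have "(\<Sum>i\<in>{1..<Suc m}. a (Suc m - i) * EE (qq M \<xi>) m (\<lambda>x. bind01 (x i)))
      = (\<Sum>i\<in>{Suc 0..<Suc m}. a (Suc m - i) * rr (i - 1))"
    by (intro sum.cong) (auto simp: EE_bind)
  also have "\<dots> = (\<Sum>k\<in>{0..<m}. a (m - k) * rr k)"
    by (subst sum.shift_bounds_Suc_ivl) simp
  finally show ?thesis by (simp add: atLeast0LessThan)
qed


lemma EE_G: "EE (qq M \<xi>) (Suc n) (\<lambda>x. exp (t * bind01 (x (Suc n)))) = 1 + (exp t - 1) * rr n"
proof -
  have "EE (qq M \<xi>) (Suc n) (\<lambda>x. exp (t * bind01 (x (Suc n))))
     = EE (qq M \<xi>) (Suc n) (\<lambda>x. (\<lambda>_. 1) x * (\<lambda>b. exp (t * bind01 b)) (x (Suc n)))" by simp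
  also have "\<dots> = EE (qq M \<xi>) n (\<lambda>x. 1 * ((1 - dthp_intensity a (Suc n) x) * exp (t * bind01 False)
         + dthp_intensity a (Suc n) x * exp (t * bind01 True)))"
    by (rule K.EE_Suc_prod) simp
  also have "\<dots> = EE (qq M \<xi>) n (\<lambda>x. 1 + (exp t - 1) * dthp_intensity a (Suc n) x)"
    by (rule EE_cong) (simp add: bind01_def algebra_simps)
  also have "\<dots> = 1 + (exp t - 1) * rr n"
    by (simp add: EE_add K.EE_const EE_cmult rr_def)
  finally show ?thesis .
qed

lemma Zlow: "EE (qq M \<xi>) n (PP t n) * (1 + (exp t - 1) * rr n) \<le> EE (qq M \<xi>) (Suc n) (PP t (Suc n))"
proof -
  let ?F = "PP t n" and ?G = "\<lambda>x. exp (t * bind01 (x (Suc n)))"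
  have eF: "EE (qq M \<xi>) (Suc n) ?F = EE (qq M \<xi>) n (PP t n)"
    by (rule K.EE_marg1) (simp add: PP_upd)
  have eP: "PP t (Suc n) = (\<lambda>x. ?F x * ?G x)" by (simp add: fun_eq_iff PP_Suc)
  have s1: "(\<forall>i. x i \<longrightarrow> y i) \<Longrightarrow> (\<Sum>i\<in>{1..n}. bind01 (x i)) \<le> (\<Sum>i\<in>{1..n}. bind01 (y i))" for x y
    by (rule bsum_mono)
  have s2: "(\<forall>i. x i \<longrightarrow> y i) \<Longrightarrow> bind01 (x (Suc n)) \<le> bind01 (y (Suc n))" for x y
    unfolding bind01_def by auto
  have "EE (qq M \<xi>) (Suc n) ?F * EE (qq M \<xi>) (Suc n) ?G \<le> EE (qq M \<xi>) (Suc n) (\<lambda>x. ?F x * ?G x)"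
  proof (cases "0 \<le> t")
    case True
    have m1: "monoS (Suc n) ?F" unfolding PP_def[abs_def] by (rule mono_exp_pos[OF s1 True])
    have m2: "monoS (Suc n) ?G" by (rule mono_exp_pos[OF s2 True])
    show ?thesis by (rule K.FKG[OF m1 m2])
  next
    case False
    then have t: "t \<le> 0" by simp
    have m1: "monoS (Suc n) (\<lambda>x. - ?F x)" unfolding PP_def[abs_def] by (rule mono_exp_neg[OF s1 t])
    have m2: "monoS (Suc n) (\<lambda>x. - ?G x)" by (rule mono_exp_neg[OF s2 t])
    have "EE (qq M \<xi>) (Suc n) (\<lambda>x. - ?F x) * EE (qq M \<xi>) (Suc n) (\<lambda>x. - ?G x)
       \<le> EE (qq M \<xi>) (Suc n) (\<lambda>x. - ?F x * - ?G x)" by (rule K.FKG[OF m1 m2])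
    then show ?thesis by (simp add: EE_neg)
  qed
  then show ?thesis using eF EE_G[of n t] eP by simp
qed

lemma Zup:
  assumes "\<And>x. 1 + (exp t - 1) * dthp_intensity a (Suc n) x \<le> c"
  shows "EE (qq M \<xi>) (Suc n) (PP t (Suc n)) \<le> c * EE (qq M \<xi>) n (PP t n)"
proof -
  have "EE (qq M \<xi>) (Suc n) (PP t (Suc n)) \<le> EE (qq M \<xi>) n (\<lambda>x. c * PP t n x)"
    unfolding Zrec
    by (rule K.EE_mono) (simp add: assms PP_pos less_imp_le mult.commute mult_left_mono)
  then show ?thesis by (simp add: EE_cmult)
qed

lemma EE_QQ: "EE (qq M \<xi>) n (QQ n) = (1 - a 0) ^ n"
proof (induction n)
  case 0 show ?case using K.EE_const[of 0 1] by (simp add: QQ_def)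
next
  case (Suc n)
  have "EE (qq M \<xi>) (Suc n) (QQ (Suc n)) =
      EE (qq M \<xi>) (Suc n) (\<lambda>x. QQ n x * (\<lambda>b. if b then 0 else 1) (x (Suc n)))"
    by (rule arg_cong[where f="EE (qq M \<xi>) (Suc n)"]) (simp add: fun_eq_iff QQ_Suc)
  also have "\<dots> = EE (qq M \<xi>) n (\<lambda>x. QQ n x * ((1 - dthp_intensity a (Suc n) x) * (if False then 0 else 1)
         + dthp_intensity a (Suc n) x * (if True then 0 else 1)))"
    by (rule K.EE_Suc_prod[where g="\<lambda>b. if b then 0 else 1"]) (simp add: QQ_upd)
  also have "\<dots> = EE (qq M \<xi>) n (\<lambda>x. (1 - a 0) * QQ n x)"
  proof (rule EE_cong)
    fix x
    show "QQ n x * ((1 - dthp_intensity a (Suc n) x) * (if False then 0 else 1)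
         + dthp_intensity a (Suc n) x * (if True then 0 else 1)) = (1 - a 0) * QQ n x"
    proof (cases "\<forall>i\<in>{1..n}. \<not> x i")
      case True
      then have "dthp_intensity a (Suc n) x = a 0"
        unfolding dthp_intensity_def bind01_def by (auto intro!: sum.neutral)
      then show ?thesis by simp
    next
      case False then show ?thesis by (auto simp: QQ_def)
    qed
  qed
  also have "\<dots> = (1 - a 0) ^ Suc n" by (simp add: EE_cmult Suc)
  finally show ?case .
qed

lemma Z_ge_QQ: "(1 - a 0) ^ n \<le> EE (qq M \<xi>) n (PP t n)"
  unfolding EE_QQ[symmetric] by (rule K.EE_mono) (rule QQ_le_PP)

end


theorem theorem4p9:
  fixes M :: "'w measure" and a :: "nat \<Rightarrow> real" and \<xi> :: "nat \<Rightarrow> 'w \<Rightarrow> bool"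
    and t \<Gamma> :: real
  assumes pos: "\<And>i. a i > 0"
    and summ: "summable a" and lt1: "(\<Sum>i. a i) < 1"
    and summ_i: "summable (\<lambda>i. real i * a i)"
    and dthp: "is_DTHP M a \<xi>"
    and Gamma: "(\<lambda>n. ln (integral\<^sup>L M (\<lambda>\<omega>. exp (t * dthp_H \<xi> n \<omega>))) / real n)
                  \<longlonglongrightarrow> \<Gamma>"
  defines "pstar \<equiv> a 0 / (1 - (\<Sum>i. a (Suc i)))"
  shows "(t \<ge> 0 \<longrightarrow>
            ln (1 + (exp t - 1) * pstar) \<le> \<Gamma> \<and> \<Gamma> \<le> ln (1 + (exp t - 1) * (\<Sum>i. a i)))
       \<and> (t < 0 \<longrightarrow>
            max (ln (1 + (exp t - 1) * pstar)) (ln (1 - a 0)) \<le> \<Gamma> \<and>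
            \<Gamma> \<le> ln (1 + (exp t - 1) * a 0))"
proof -
  define Z where "Z n = EE (qq M \<xi>) n (PP t n)" for n
  define r where "r = rr M a \<xi>"
  define s1 where "s1 = (\<Sum>i. a (Suc i))"
  have summ1: "summable (\<lambda>i. a (Suc i))" using summ by (simp add: summable_Suc_iff)
  have sa: "(\<Sum>i. a i) = a 0 + s1" using suminf_split_head[OF summ] unfolding s1_def by simp
  have lt: "a 0 + s1 < 1" using lt1 sa by simp
  have pdef: "pstar = a 0 / (1 - s1)" unfolding pstar_def s1_def ..
  have rrec: "\<And>m. r m = a 0 + (\<Sum>k<m. a (m - k) * r k)"
    unfolding r_def by (rule rr_rec[OF pos summ lt1 dthp])
  note seqa = pos summ1 s1_def lt pdef rrec
  have r_le: "r m \<le> pstar" for m by (rule r_le[OF seqa])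
  have r_nn: "0 \<le> r m" for m by (rule r_nonneg[OF seqa])
  have ps_lt1: "pstar < 1" by (rule ps_lt1[OF seqa])
  have ps_nn: "0 \<le> pstar" by (rule ps_nonneg[OF seqa])
  have r_inc: "incseq r" by (rule r_incseq[OF seqa])
  have r_lim: "r \<longlonglongrightarrow> pstar" by (rule r_lim[OF seqa])
  have r_le1: "r m \<le> 1" for m using r_le[of m] ps_lt1 by simp
  have GZ: "(\<lambda>n. ln (Z n) / real n) \<longlonglongrightarrow> \<Gamma>"
    using Gamma unfolding Z_def Zint[OF pos summ lt1 dthp] .
  have Z0: "Z 0 = 1" unfolding Z_def by (rule Z0[OF pos summ lt1 dthp])
  define f where "f k = 1 + (exp t - 1) * r k" for k
  have fpos: "0 < f k" for k
  proof (cases "0 \<le> t")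
    case True
    then have "0 \<le> (exp t - 1) * r k" using r_nn by simp
    then show ?thesis unfolding f_def by simp
  next
    case False
    have "(exp t - 1) * r k \<ge> (exp t - 1) * 1"
      using False r_le1[of k] by (intro mult_left_mono_neg) auto
    then show ?thesis unfolding f_def using exp_gt_zero[of t] mult_1_right[of "exp t - 1"] by linarith
  qed
  have Zprod: "(\<Prod>k<n. f k) \<le> Z n" for n
  proof (induction n)
    case 0 then show ?case using Z0 by simp
  next
    case (Suc n)
    have "(\<Prod>k<Suc n. f k) = (\<Prod>k<n. f k) * f n" by simp
    also have "\<dots> \<le> Z n * f n" using Suc fpos[of n] by (intro mult_right_mono) (auto simp: less_imp_le)
    also have "\<dots> \<le> Z (Suc n)" unfolding Z_def f_def r_def by (rule Zlow[OF pos summ lt1 dthp])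
    finally show ?case .
  qed
  have Zpos: "0 < Z n" for n
    using Zprod[of n] prod_pos[of "{..<n}" f] fpos by (meson less_le_trans)
  have lnZ: "(\<Sum>k<n. ln (f k)) \<le> ln (Z n)" for n
  proof -
    have "ln (\<Prod>k<n. f k) = (\<Sum>k<n. ln (f k))"
      by (rule ln_prod) (simp, metis fpos less_irrefl)
    then have "(\<Sum>k<n. ln (f k)) = ln (\<Prod>k<n. f k)" by simp
    also have "\<dots> \<le> ln (Z n)" using Zprod[of n] fpos by (intro ln_mono prod_pos) (auto simp: Zpos)
    finally show ?thesis .
  qed
  have upper: "\<Gamma> \<le> ln c" if c: "0 < c" "\<And>n x. 1 + (exp t - 1) * dthp_intensity a (Suc n) x \<le> c" for c
  proof -
    have Zc: "Z n \<le> c ^ n" for n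
    proof (induction n)
      case 0 then show ?case using Z0 by simp
    next
      case (Suc n)
      have "Z (Suc n) \<le> c * Z n" unfolding Z_def by (rule Zup[OF pos summ lt1 dthp c(2)])
      also have "\<dots> \<le> c * c ^ n" using Suc c(1) by (intro mult_left_mono) auto
      finally show ?case by simp
    qed
    show ?thesis
    proof (rule LIMSEQ_le_const2[OF GZ], intro exI allI impI)
      fix n :: nat assume n: "1 \<le> n"
      have "ln (Z n) \<le> ln (c ^ n)" using Zc[of n] Zpos[of n] by (intro ln_mono) auto
      also have "\<dots> = real n * ln c" by (rule ln_realpow)
      finally show "ln (Z n) / real n \<le> ln c" using n by (simp add: divide_le_eq mult.commute)
    qed
  qed
  have lower: "ln c \<le> \<Gamma>" if c: "0 < c" "\<And>n. c ^ n \<le> Z n" for c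
  proof (rule LIMSEQ_le_const[OF GZ], intro exI allI impI)
    fix n :: nat assume n: "1 \<le> n"
    have "real n * ln c = ln (c ^ n)" by (rule ln_realpow[symmetric])
    also have "\<dots> \<le> ln (Z n)" using c by (intro ln_mono) auto
    finally show "ln c \<le> ln (Z n) / real n" using n by (simp add: le_divide_eq mult.commute)
  qed
  have g_ps_pos: "0 < 1 + (exp t - 1) * pstar"
  proof (cases "0 \<le> t")
    case True
    then have "0 \<le> (exp t - 1) * pstar" using ps_nn by simp
    then show ?thesis by linarith
  next
    case False
    have "(exp t - 1) * pstar \<ge> (exp t - 1) * 1"
      using False ps_lt1 by (intro mult_left_mono_neg) auto
    then show ?thesis using exp_gt_zero[of t] mult_1_right[of "exp t - 1"] by linarith
  qed
  have part1: "0 \<le> t \<Longrightarrow> ln (1 + (exp t - 1) * pstar) \<le> \<Gamma>"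
  proof -
    assume t: "0 \<le> t"
    have f1: "1 \<le> f k" for k unfolding f_def using t r_nn by simp
    have fmono: "f K \<le> f k" if "K \<le> k" for K k
      unfolding f_def using t incseqD[OF r_inc that] by (intro add_left_mono mult_left_mono) auto
    have gK: "ln (f K) \<le> \<Gamma>" for K
    proof (rule LIMSEQ_le[where X="\<lambda>n. ln (f K) - real K * ln (f K) / real n"])
      show "(\<lambda>n. ln (f K) - real K * ln (f K) / real n) \<longlonglongrightarrow> ln (f K)"
      proof -
        have "(\<lambda>n. real K * ln (f K) / real n) \<longlonglongrightarrow> 0" by (rule lim_const_over_n)
        then have "(\<lambda>n. ln (f K) - real K * ln (f K) / real n) \<longlonglongrightarrow> ln (f K) - 0"
          by (intro tendsto_diff tendsto_const)
        then show ?thesis by simp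
      qed
      show "\<exists>N. \<forall>n\<ge>N. ln (f K) - real K * ln (f K) / real n \<le> ln (Z n) / real n"
      proof (intro exI allI impI)
        fix n assume n: "Suc K \<le> n"
        have g0: "0 \<le> ln (f k)" for k using f1[of k] by simp
        have "(\<Sum>k<n. ln (f k)) = (\<Sum>k\<in>{0..<K}. ln (f k)) + (\<Sum>k\<in>{K..<n}. ln (f k))"
          using n by (simp add: sum.atLeastLessThan_concat atLeast0LessThan[symmetric])
        also have "\<dots> \<ge> 0 + (\<Sum>k\<in>{K..<n}. ln (f K))"
          using g0 fpos fmono by (intro add_mono sum_nonneg sum_mono ln_mono) auto
        finally have "real (n - K) * ln (f K) \<le> ln (Z n)" using lnZ[of n] by simp
        then have "real n * ln (f K) - real K * ln (f K) \<le> ln (Z n)"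
          using n by (simp add: of_nat_diff left_diff_distrib)
        then have "(real n * ln (f K) - real K * ln (f K)) / real n \<le> ln (Z n) / real n"
          by (rule divide_right_mono) simp
        moreover have "ln (f K) - real K * ln (f K) / real n = (real n * ln (f K) - real K * ln (f K)) / real n"
          using n by (simp add: field_simps)
        ultimately show "ln (f K) - real K * ln (f K) / real n \<le> ln (Z n) / real n" by simp
      qed
    qed (rule GZ)
    have "(\<lambda>K. ln (f K)) \<longlonglongrightarrow> ln (1 + (exp t - 1) * pstar)"
      unfolding f_def using g_ps_pos by (intro tendsto_intros r_lim) auto
    then show ?thesis by (rule LIMSEQ_le_const2) (use gK in auto)
  qed
  have part2: "t < 0 \<Longrightarrow> ln (1 + (exp t - 1) * pstar) \<le> \<Gamma>"
  proof -
    assume t: "t < 0"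
    show ?thesis
    proof (rule lower[OF g_ps_pos])
      fix n
      have "(1 + (exp t - 1) * pstar) ^ n = (\<Prod>k<n. 1 + (exp t - 1) * pstar)" by simp
      also have "\<dots> \<le> (\<Prod>k<n. f k)"
      proof (rule prod_mono)
        fix k
        have "(exp t - 1) * pstar \<le> (exp t - 1) * r k" using t r_le[of k] by (intro mult_left_mono_neg) auto
        then show "0 \<le> 1 + (exp t - 1) * pstar \<and> 1 + (exp t - 1) * pstar \<le> f k"
          using g_ps_pos unfolding f_def by simp
      qed
      also have "\<dots> \<le> Z n" by (rule Zprod)
      finally show "(1 + (exp t - 1) * pstar) ^ n \<le> Z n" .
    qed
  qed
  have part3: "ln (1 - a 0) \<le> \<Gamma>"
  proof (rule lower)
    show "0 < 1 - a 0" using lt pos[of 0] s1_def suminf_nonneg[OF summ1] pos by (simp add: less_imp_le)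
    show "(1 - a 0) ^ n \<le> Z n" for n unfolding Z_def by (rule Z_ge_QQ[OF pos summ lt1 dthp])
  qed
  have part4: "0 \<le> t \<Longrightarrow> \<Gamma> \<le> ln (1 + (exp t - 1) * (\<Sum>i. a i))"
  proof -
    assume t: "0 \<le> t"
    show ?thesis
    proof (rule upper)
      have "0 \<le> (\<Sum>i. a i)" using suminf_nonneg[OF summ] pos by (simp add: less_imp_le)
      then have "0 \<le> (exp t - 1) * (\<Sum>i. a i)" using t by simp
      then show "0 < 1 + (exp t - 1) * (\<Sum>i. a i)" by linarith
      fix n x
      show "1 + (exp t - 1) * dthp_intensity a (Suc n) x \<le> 1 + (exp t - 1) * (\<Sum>i. a i)"
        using t intensity_le[of a "Suc n" x] summ pos by (simp add: less_imp_le mult_left_mono)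
    qed
  qed
  have part5: "t < 0 \<Longrightarrow> \<Gamma> \<le> ln (1 + (exp t - 1) * a 0)"
  proof -
    assume t: "t < 0"
    show ?thesis
    proof (rule upper)
      have "(exp t - 1) * a 0 \<ge> (exp t - 1) * 1"
        using t lt s1_def suminf_nonneg[OF summ1] pos by (intro mult_left_mono_neg) (auto simp: less_imp_le)
      then show "0 < 1 + (exp t - 1) * a 0" using exp_gt_zero[of t] mult_1_right[of "exp t - 1"] by linarith
      fix n x
      show "1 + (exp t - 1) * dthp_intensity a (Suc n) x \<le> 1 + (exp t - 1) * a 0"
        using t intensity_ge[of a "Suc n" x] pos by (simp add: less_imp_le mult_left_mono_neg)
    qed
  qed
  show ?thesis using part1 part2 part3 part4 part5 by auto
qed


end
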